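(* For every $r\ge 1$ and $k\ge 1$ there exists $n_0=n_0(r,k)$ such that for every $n>n_0$ the following holds. Let $[n]^r$ denote the complete $r$-partite $r$-uniform hypergraph with $r$ disjoint sides $V_1,\ldots,V_r$, each of size $n$, whose edges are all $r$-sets meeting each $V_j$ in exactly one vertex. If $F_1,\ldots,F_k\subseteq [n]^r$ satisfy $|F_i|>(k-1)n^{r-1}$ for all $i\le k$, then there exist pairwise disjoint edges $e_1,\ldots,e_k$ with $e_i\in F_i$ for every $i$ (a rainbow matching).
   Context: A rainbow matching for a collection $(F_1,\ldots,F_k)$ of hypergraphs is a choice of pairwise disjoint edges $e_i\in F_i$, one from each $F_i$. *)

theory Defs
  imports Main
begin

text \<open>Vertices of the complete r-partite r-uniform hypergraph with sides of size n:
  pairs (j, v) with j < r (side index) and v < n (vertex within side V_j).\<close>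

definition complete_rpartite :: "nat \<Rightarrow> nat \<Rightarrow> (nat \<times> nat) set set" where
  "complete_rpartite r n =
     {e. e \<subseteq> {0..<r} \<times> {0..<n} \<and> (\<forall>j<r. card {v. (j, v) \<in> e} = 1)}"

definition rainbow_matching ::
  "nat \<Rightarrow> (nat \<Rightarrow> 'a set set) \<Rightarrow> (nat \<Rightarrow> 'a set) \<Rightarrow> bool" where
  "rainbow_matching k F e \<longleftrightarrow>
     (\<forall>i<k. e i \<in> F i) \<and> (\<forall>i<k. \<forall>j<k. i \<noteq> j \<longrightarrow> e i \<inter> e j = {})"

end

theory Submission
  imports Defs "HOL-Library.FuncSet"
begin


definition efun :: "nat \<Rightarrow> (nat \<times> nat) set \<Rightarrow> nat \<Rightarrow> nat" where
  "efun r e = (\<lambda>j\<in>{0..<r}. THE v. (j, v) \<in> e)"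

lemma edge_unique:
  assumes "e \<in> complete_rpartite r n" "j < r"
  shows "\<exists>!v. (j, v) \<in> e"
proof -
  have "card {v. (j, v) \<in> e} = 1" using assms by (simp add: complete_rpartite_def)
  then obtain x where "{v. (j, v) \<in> e} = {x}" by (auto simp: card_1_singleton_iff)
  then show ?thesis by (metis (mono_tags) mem_Collect_eq singletonD singletonI)
qed

lemma edge_the:
  assumes "e \<in> complete_rpartite r n" "(j, v) \<in> e"
  shows "j < r" "v < n" "efun r e j = v"
proof -
  show "j < r" "v < n" using assms by (auto simp: complete_rpartite_def)
  then show "efun r e j = v" using edge_unique[OF assms(1), of j] assms
    by (auto simp: efun_def intro!: the_equality)
qed

lemma edge_repr:
  assumes "e \<in> complete_rpartite r n"
  shows "e = (\<lambda>j. (j, efun r e j)) ` {0..<r}"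
proof
  show "e \<subseteq> (\<lambda>j. (j, efun r e j)) ` {0..<r}"
  proof
    fix x assume "x \<in> e"
    then obtain j v where x: "x = (j, v)" "(j,v) \<in> e" by (cases x) auto
    show "x \<in> (\<lambda>j. (j, efun r e j)) ` {0..<r}"
      using edge_the[OF assms x(2)] x by force
  qed
next
  show "(\<lambda>j. (j, efun r e j)) ` {0..<r} \<subseteq> e"
  proof
    fix x assume "x \<in> (\<lambda>j. (j, efun r e j)) ` {0..<r}"
    then obtain j where j: "j < r" "x = (j, efun r e j)" by auto
    obtain v where v: "(j, v) \<in> e" using edge_unique[OF assms j(1)] by auto
    show "x \<in> e" using edge_the[OF assms v] j v by simp
  qed
qed

lemma edge_finite_card:
  assumes "e \<in> complete_rpartite r n"
  shows "finite e" "card e \<le> r"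
proof -
  have "finite ((\<lambda>j. (j, efun r e j)) ` {0..<r})" by simp
  then show "finite e" using edge_repr[OF assms] by simp
  have "card ((\<lambda>j. (j, efun r e j)) ` {0..<r}) \<le> r"
    using card_image_le[of "{0..<r}"] by fastforce
  then show "card e \<le> r" using edge_repr[OF assms] by simp
qed

lemma efun_inj: "inj_on (efun r) (complete_rpartite r n)"
  by (rule inj_onI) (metis edge_repr)

lemma count_edges:
  assumes "\<And>j. j < r \<Longrightarrow> A j \<subseteq> {0..<n}"
  shows "card {e \<in> complete_rpartite r n. \<forall>j<r. efun r e j \<in> A j} \<le> (\<Prod>j\<in>{0..<r}. card (A j))"
proof -
  have "card {e \<in> complete_rpartite r n. \<forall>j<r. efun r e j \<in> A j} \<le> card (PiE {0..<r} A)"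
  proof (rule card_inj_on_le)
    show "inj_on (efun r) {e \<in> complete_rpartite r n. \<forall>j<r. efun r e j \<in> A j}"
      using efun_inj by (rule inj_on_subset) auto
    show "efun r ` {e \<in> complete_rpartite r n. \<forall>j<r. efun r e j \<in> A j} \<subseteq> PiE {0..<r} A"
      by (auto simp: efun_def PiE_def extensional_def)
    show "finite (PiE {0..<r} A)"
      using assms by (intro finite_PiE) (auto intro: finite_subset)
  qed
  then show ?thesis by (simp add: card_PiE)
qed


lemma prod_if_pow: "(\<Prod>j\<in>{0..<(r::nat)}. (if j \<in> S then 1 else (n::nat))) = n ^ card ({0..<r} - S)"
proof -
  have "(\<Prod>j\<in>{0..<r}. (if j \<in> S then 1 else (n::nat))) =
     prod (\<lambda>_. 1) ({0..<r} \<inter> {j. j \<in> S}) * prod (\<lambda>_. n) ({0..<r} \<inter> - {j. j \<in> S})"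
    by (rule prod.If_cases) simp
  also have "\<dots> = n ^ card ({0..<r} - S)" by (simp add: Diff_eq)
  finally show ?thesis .
qed

definition deg :: "(nat \<times> nat) set set \<Rightarrow> nat \<times> nat \<Rightarrow> nat" where
  "deg F v = card {e \<in> F. v \<in> e}"

lemma deg_le:
  assumes "F \<subseteq> complete_rpartite r n"
  shows "deg F x \<le> n ^ (r - 1)"
proof (cases x)
  case (Pair j0 v0)
  show ?thesis
  proof (cases "j0 < r \<and> v0 < n")
    case True
    define A where "A j = (if j = j0 then {v0} else {0..<n})" for j
    have "{e \<in> F. x \<in> e} \<subseteq> {e \<in> complete_rpartite r n. \<forall>j<r. efun r e j \<in> A j}"
    proof
      fix e assume e: "e \<in> {e \<in> F. x \<in> e}"
      then have ec: "e \<in> complete_rpartite r n" using assms by auto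
      have "\<forall>j<r. efun r e j \<in> A j"
      proof (intro allI impI)
        fix j assume "j < r"
        then obtain v where v: "(j, v) \<in> e" using edge_unique[OF ec] by blast
        show "efun r e j \<in> A j"
          using edge_the[OF ec v] edge_the[OF ec, of j0 v0] e Pair by (auto simp: A_def)
      qed
      then show "e \<in> {e \<in> complete_rpartite r n. \<forall>j<r. efun r e j \<in> A j}" using ec by simp
    qed
    moreover have "finite {e \<in> complete_rpartite r n. \<forall>j<r. efun r e j \<in> A j}"
    proof -
      have "finite (complete_rpartite r n)"
      proof (rule finite_subset)
        show "complete_rpartite r n \<subseteq> Pow ({0..<r} \<times> {0..<n})"
          by (auto simp: complete_rpartite_def)
      qed simp
      then show ?thesis by simp
    qed
    ultimately have "deg F x \<le> card {e \<in> complete_rpartite r n. \<forall>j<r. efun r e j \<in> A j}"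
      unfolding deg_def by (rule card_mono[rotated])
    also have "\<dots> \<le> (\<Prod>j\<in>{0..<r}. card (A j))"
      by (rule count_edges) (use True in \<open>auto simp: A_def\<close>)
    also have "(\<Prod>j\<in>{0..<r}. card (A j)) = (\<Prod>j\<in>{0..<r}. (if j \<in> {j0} then 1 else n))"
      by (rule prod.cong) (auto simp: A_def)
    also have "\<dots> = n ^ (r - 1)" using True by (simp only: prod_if_pow) simp
    finally show ?thesis .
  next
    case False
    then have "{e \<in> F. x \<in> e} = {}" using assms Pair edge_the by blast
    then show ?thesis unfolding deg_def by (metis card.empty le0)
  qed
qed


lemma finite_complete: "finite (complete_rpartite r n)"
proof (rule finite_subset)
  show "complete_rpartite r n \<subseteq> Pow ({0..<r} \<times> {0..<n})"
    by (auto simp: complete_rpartite_def)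
qed simp

lemma codeg_le:
  assumes "u \<noteq> w"
  shows "n * card {e \<in> complete_rpartite r n. u \<in> e \<and> w \<in> e} \<le> n ^ (r - 1)"
proof (cases u; cases w)
  fix j1 v1 j2 v2 assume u: "u = (j1, v1)" and w: "w = (j2, v2)"
  show ?thesis
  proof (cases "j1 < r \<and> v1 < n \<and> j2 < r \<and> v2 < n \<and> j1 \<noteq> j2")
    case True
    define A where "A j = (if j = j1 then {v1} else if j = j2 then {v2} else {0..<n})" for j
    have "{e \<in> complete_rpartite r n. u \<in> e \<and> w \<in> e} \<subseteq> {e \<in> complete_rpartite r n. \<forall>j<r. efun r e j \<in> A j}"
    proof
      fix e assume e: "e \<in> {e \<in> complete_rpartite r n. u \<in> e \<and> w \<in> e}"
      then have ec: "e \<in> complete_rpartite r n" by auto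
      have "\<forall>j<r. efun r e j \<in> A j"
      proof (intro allI impI)
        fix j assume "j < r"
        then obtain v where v: "(j, v) \<in> e" using edge_unique[OF ec] by blast
        show "efun r e j \<in> A j"
          using edge_the[OF ec v] edge_the[OF ec, of j1 v1] edge_the[OF ec, of j2 v2] e u w
          by (auto simp: A_def)
      qed
      then show "e \<in> {e \<in> complete_rpartite r n. \<forall>j<r. efun r e j \<in> A j}" using ec by simp
    qed
    then have "card {e \<in> complete_rpartite r n. u \<in> e \<and> w \<in> e} \<le> card {e \<in> complete_rpartite r n. \<forall>j<r. efun r e j \<in> A j}"
      by (rule card_mono[rotated]) (simp add: finite_complete)
    also have "\<dots> \<le> (\<Prod>j\<in>{0..<r}. card (A j))"
      by (rule count_edges) (use True in \<open>auto simp: A_def\<close>)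
    also have "(\<Prod>j\<in>{0..<r}. card (A j)) = (\<Prod>j\<in>{0..<r}. (if j \<in> {j1, j2} then 1 else n))"
      by (rule prod.cong) (auto simp: A_def)
    also have "\<dots> = n ^ card ({0..<r} - {j1, j2})" by (simp only: prod_if_pow)
    also have "card ({0..<r} - {j1, j2}) = r - 2" using True by (simp add: card_Diff_subset)
    finally have c: "card {e \<in> complete_rpartite r n. u \<in> e \<and> w \<in> e} \<le> n ^ (r - 2)" .
    have "r \<ge> 2" using True by auto
    then have "n * n ^ (r - 2) = n ^ (r - 1)"
      by (metis Suc_diff_Suc numeral_2_eq_2 one_add_one plus_1_eq_Suc power_Suc less_le_trans
          diff_Suc_1 lessI Suc_le_lessD)
    then show ?thesis using c by (metis mult_le_mono2)
  next
    case False
    have "{e \<in> complete_rpartite r n. u \<in> e \<and> w \<in> e} = {}"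
    proof (rule ccontr)
      assume "{e \<in> complete_rpartite r n. u \<in> e \<and> w \<in> e} \<noteq> {}"
      then obtain e where ec: "e \<in> complete_rpartite r n" and "u \<in> e" "w \<in> e" by auto
      then have "(j1, v1) \<in> e" "(j2, v2) \<in> e" using u w by auto
      from edge_the[OF ec this(1)] edge_the[OF ec this(2)] False assms u w
      show False by auto
    qed
    then show ?thesis by (metis card.empty mult_0_right le0)
  qed
qed


lemma avoid_count:
  assumes "finite F" "finite Z"
  shows "card F \<le> card {e \<in> F. e \<inter> Z = {}} + (\<Sum>z\<in>Z. deg F z)"
proof -
  have "F \<subseteq> {e \<in> F. e \<inter> Z = {}} \<union> (\<Union>z\<in>Z. {e \<in> F. z \<in> e})" by auto
  then have "card F \<le> card ({e \<in> F. e \<inter> Z = {}} \<union> (\<Union>z\<in>Z. {e \<in> F. z \<in> e}))"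
    by (rule card_mono[rotated]) (use assms in auto)
  also have "\<dots> \<le> card {e \<in> F. e \<inter> Z = {}} + card (\<Union>z\<in>Z. {e \<in> F. z \<in> e})"
    by (rule card_Un_le)
  also have "card (\<Union>z\<in>Z. {e \<in> F. z \<in> e}) \<le> (\<Sum>z\<in>Z. deg F z)"
    unfolding deg_def using assms by (intro card_UN_le) auto
  finally show ?thesis by simp
qed

lemma through_count:
  assumes F: "F \<subseteq> complete_rpartite r n" and "finite Z" "a \<notin> Z"
  shows "deg F a \<le> card {e \<in> F. a \<in> e \<and> e \<inter> Z = {}}
           + (\<Sum>z\<in>Z. card {e \<in> complete_rpartite r n. a \<in> e \<and> z \<in> e})"
proof -
  have fF: "finite F" using F finite_complete finite_subset by blast
  have "{e \<in> F. a \<in> e} \<subseteq> {e \<in> F. a \<in> e \<and> e \<inter> Z = {}} \<union> (\<Union>z\<in>Z. {e \<in> complete_rpartite r n. a \<in> e \<and> z \<in> e})"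
    using F by auto
  then have "deg F a \<le> card ({e \<in> F. a \<in> e \<and> e \<inter> Z = {}} \<union> (\<Union>z\<in>Z. {e \<in> complete_rpartite r n. a \<in> e \<and> z \<in> e}))"
    unfolding deg_def by (rule card_mono[rotated]) (use fF finite_complete assms in auto)
  also have "\<dots> \<le> card {e \<in> F. a \<in> e \<and> e \<inter> Z = {}} + card (\<Union>z\<in>Z. {e \<in> complete_rpartite r n. a \<in> e \<and> z \<in> e})"
    by (rule card_Un_le)
  also have "card (\<Union>z\<in>Z. {e \<in> complete_rpartite r n. a \<in> e \<and> z \<in> e}) \<le> (\<Sum>z\<in>Z. card {e \<in> complete_rpartite r n. a \<in> e \<and> z \<in> e})"
    using assms finite_complete by (intro card_UN_le) auto
  finally show ?thesis by simp
qed

lemma heavy_edge: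
  assumes F: "F \<subseteq> complete_rpartite r n" and Z: "finite Z" "a \<notin> Z" "card Z \<le> T"
    and h: "c * deg F a \<ge> n ^ (r - 1)" and n: "n > c * T"
  shows "\<exists>e\<in>F. a \<in> e \<and> e \<inter> Z = {}"
proof (rule ccontr)
  assume "\<not> ?thesis"
  then have G: "{e \<in> F. a \<in> e \<and> e \<inter> Z = {}} = {}" by auto
  let ?D = "n ^ (r - 1)"
  have "deg F a \<le> (\<Sum>z\<in>Z. card {e \<in> complete_rpartite r n. a \<in> e \<and> z \<in> e})"
    using through_count[OF F Z(1,2)] G by simp
  then have "n * deg F a \<le> n * (\<Sum>z\<in>Z. card {e \<in> complete_rpartite r n. a \<in> e \<and> z \<in> e})"
    by simp
  also have "\<dots> = (\<Sum>z\<in>Z. n * card {e \<in> complete_rpartite r n. a \<in> e \<and> z \<in> e})"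
    by (simp add: sum_distrib_left)
  also have "\<dots> \<le> (\<Sum>z\<in>Z. ?D)"
    using Z(2) by (intro sum_mono codeg_le) auto
  also have "\<dots> = card Z * ?D" by simp
  also have "\<dots> \<le> T * ?D" using Z(3) by simp
  finally have 1: "n * deg F a \<le> T * ?D" .
  have "n * ?D \<le> n * (c * deg F a)" using h by simp
  also have "\<dots> = c * (n * deg F a)" by simp
  also have "\<dots> \<le> c * (T * ?D)" using 1 by simp
  finally have 2: "n * ?D \<le> (c * T) * ?D" by simp
  have "?D > 0" using n by simp
  then have "n \<le> c * T" using 2 by simp
  then show False using n by simp
qed

definition heavy :: "nat \<Rightarrow> nat \<Rightarrow> nat \<Rightarrow> (nat \<times> nat) set set \<Rightarrow> (nat \<times> nat) set" where
  "heavy c n r F = {v. c * deg F v \<ge> n ^ (r - 1)}"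

lemma heavy_finite:
  assumes F: "F \<subseteq> complete_rpartite r n" and "n > 0"
  shows "finite (heavy c n r F)"
proof (rule finite_subset)
  show "heavy c n r F \<subseteq> {0..<r} \<times> {0..<n}"
  proof
    fix v assume "v \<in> heavy c n r F"
    moreover have "(1::nat) \<le> n ^ (r - 1)" using \<open>n > 0\<close> by simp
    ultimately have "c * deg F v \<ge> 1" unfolding heavy_def using le_trans by blast
    then have "deg F v \<noteq> 0" by (cases "deg F v") auto
    then have "{e \<in> F. v \<in> e} \<noteq> {}" unfolding deg_def by force
    then obtain e where "e \<in> F" "v \<in> e" by auto
    then show "v \<in> {0..<r} \<times> {0..<n}" using F by (auto simp: complete_rpartite_def)
  qed
qed simp

lemma light_edge:
  assumes F: "F \<subseteq> complete_rpartite r n" and Z: "finite Z" "card Z \<le> T"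
    and c: "c \<ge> T" "c > 0" and n: "n > 0"
    and big: "(card (heavy c n r F) + 1) * n ^ (r - 1) < card F"
  shows "\<exists>e\<in>F. e \<inter> Z = {}"
proof (rule ccontr)
  assume "\<not> ?thesis"
  then have G: "{e \<in> F. e \<inter> Z = {}} = {}" by auto
  let ?D = "n ^ (r - 1)" and ?H = "heavy c n r F"
  have fF: "finite F" using F finite_complete finite_subset by blast
  have fH: "finite ?H" using heavy_finite[OF F n] .
  have "card F \<le> (\<Sum>z\<in>Z. deg F z)" using avoid_count[OF fF Z(1)] G by simp
  also have "\<dots> = (\<Sum>z\<in>Z \<inter> ?H. deg F z) + (\<Sum>z\<in>Z - ?H. deg F z)"
    using Z(1) by (rule sum.Int_Diff)
  finally have 0: "card F \<le> (\<Sum>z\<in>Z \<inter> ?H. deg F z) + (\<Sum>z\<in>Z - ?H. deg F z)" .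
  have "(\<Sum>z\<in>Z \<inter> ?H. deg F z) \<le> (\<Sum>z\<in>Z \<inter> ?H. ?D)"
    by (intro sum_mono deg_le[OF F])
  also have "\<dots> = card (Z \<inter> ?H) * ?D" by simp
  also have "\<dots> \<le> card ?H * ?D" using fH by (simp add: card_mono)
  finally have 1: "(\<Sum>z\<in>Z \<inter> ?H. deg F z) \<le> card ?H * ?D" .
  have "c * (\<Sum>z\<in>Z - ?H. deg F z) = (\<Sum>z\<in>Z - ?H. c * deg F z)" by (simp add: sum_distrib_left)
  also have "\<dots> \<le> (\<Sum>z\<in>Z - ?H. ?D)"
    by (intro sum_mono) (auto simp: heavy_def)
  also have "\<dots> = card (Z - ?H) * ?D" by simp
  also have "\<dots> \<le> T * ?D"
  proof -
    have "card (Z - ?H) \<le> card Z" using Z(1) by (simp add: card_mono)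
    then show ?thesis using Z(2) by (intro mult_le_mono1) linarith
  qed
  also have "\<dots> \<le> c * ?D" using c by simp
  finally have 2: "(\<Sum>z\<in>Z - ?H. deg F z) \<le> ?D" using c(2) by simp
  have "card F \<le> (card ?H + 1) * ?D" using 0 1 2 by simp
  then show False using big by simp
qed


definition robust :: "nat \<Rightarrow> (nat \<times> nat) set set \<Rightarrow> bool" where
  "robust T F \<longleftrightarrow> (\<forall>Z. finite Z \<longrightarrow> card Z \<le> T \<longrightarrow> (\<exists>e\<in>F. e \<inter> Z = {}))"

lemma nonrobust_heavy:
  assumes F: "F \<subseteq> complete_rpartite r n" and c: "c \<ge> T" "c > 0" and n: "n > 0"
    and big: "(k - 1) * n ^ (r - 1) < card F" and nr: "\<not> robust T F"
  shows "k - 1 \<le> card (heavy c n r F)"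
proof (rule ccontr)
  assume "\<not> ?thesis"
  then have "card (heavy c n r F) + 1 \<le> k - 1" by simp
  then have "(card (heavy c n r F) + 1) * n ^ (r - 1) \<le> (k - 1) * n ^ (r - 1)"
    by (rule mult_le_mono1)
  then have "(card (heavy c n r F) + 1) * n ^ (r - 1) < card F" using big by simp
  then have "robust T F" unfolding robust_def using light_edge[OF F _ _ c n] by blast
  then show False using nr by simp
qed

lemma sdr_greedy:
  assumes "finite I"
  shows "card I \<le> m \<Longrightarrow> (\<forall>i\<in>I. finite (S i) \<and> m \<le> card (S i)) \<Longrightarrow> \<exists>a. inj_on a I \<and> (\<forall>i\<in>I. a i \<in> S i)"
  using assms
proof (induction I rule: finite_induct)
  case empty
  then show ?case by auto
next
  case (insert i J)
  then obtain a where a: "inj_on a J" "\<forall>j\<in>J. a j \<in> S j" by auto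
  have "card (a ` J) \<le> card J" by (rule card_image_le) (use insert in auto)
  also have "card J < m" using insert by simp
  also have "m \<le> card (S i)" using insert by simp
  finally have "card (a ` J) < card (S i)" .
  then have "\<not> S i \<subseteq> a ` J" using insert by (meson card_mono finite_imageI not_le)
  then obtain x where x: "x \<in> S i" "x \<notin> a ` J" by auto
  show ?case
  proof (intro exI conjI)
    show "inj_on (a(i := x)) (insert i J)" using a x insert
      by (auto simp: inj_on_def)
    show "\<forall>j\<in>insert i J. (a(i := x)) j \<in> S j" using a x insert by auto
  qed
qed




lemma anchors:
  fixes H :: "nat \<Rightarrow> 'v set"
  assumes k: "k \<ge> 1" and N: "N \<subseteq> {..<k}" and H: "\<forall>i\<in>N. finite (H i) \<and> k - 1 \<le> card (H i)"
  shows "(\<exists>a. inj_on a N \<and> (\<forall>i\<in>N. a i \<in> H i)) \<or>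
         (N = {..<k} \<and> (\<forall>i<k. H i = H 0) \<and> card (H 0) = k - 1)"
proof (cases "card N \<le> k - 1")
  case True
  have "finite N" using N finite_subset by blast
  then show ?thesis using sdr_greedy[of N "k - 1" H] True H by blast
next
  case False
  have fN: "finite N" using N finite_subset by blast
  have "card N \<le> k" using N by (metis card_lessThan card_mono finite_lessThan)
  then have cN: "card N = k" using False by linarith
  have NK: "N = {..<k}" using N cN by (metis card_lessThan card_subset_eq finite_lessThan)
  show ?thesis
  proof (cases "\<exists>p<k. card (H p) \<ge> k")
    case True
    then obtain p where p: "p < k" "card (H p) \<ge> k" by auto
    have c1: "card (N - {p}) = k - 1" using cN p NK by simp
    obtain a where a: "inj_on a (N - {p})" "\<forall>i\<in>N - {p}. a i \<in> H i"
      using sdr_greedy[of "N - {p}" "k - 1" H] c1 fN H by auto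
    have "card (a ` (N - {p})) \<le> k - 1" using c1 card_image_le fN by (metis finite_Diff)
    then have "card (a ` (N - {p})) < card (H p)" using p k by linarith
    then have "\<not> H p \<subseteq> a ` (N - {p})" using fN by (meson card_mono finite_imageI finite_Diff not_le)
    then obtain x where x: "x \<in> H p" "x \<notin> a ` (N - {p})" by auto
    have "inj_on (a(p := x)) N \<and> (\<forall>i\<in>N. (a(p := x)) i \<in> H i)"
      using a x NK p by (auto simp: inj_on_def)
    then show ?thesis by blast
  next
    case False
    have eq: "\<forall>i<k. card (H i) = k - 1"
    proof (intro allI impI)
      fix i assume "i < k"
      then have "k - 1 \<le> card (H i)" "\<not> k \<le> card (H i)" using H NK False by auto
      then show "card (H i) = k - 1" by linarith
    qed
    show ?thesis
    proof (cases "\<exists>p<k. \<exists>q<k. H p \<noteq> H q")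
      case True
      then obtain p q where pq: "p < k" "q < k" "H p \<noteq> H q" by auto
      have "p \<noteq> q" using pq by auto
      have "\<not> H p \<subseteq> H q" using pq eq H NK by (metis card_subset_eq lessThan_iff)
      then obtain x where x: "x \<in> H p" "x \<notin> H q" by auto
      let ?M = "N - {p, q}"
      have cM: "card ?M = k - 2" using cN pq \<open>p \<noteq> q\<close> NK by (simp add: card_Diff_subset)
      obtain a where a: "inj_on a ?M" "\<forall>i\<in>?M. a i \<in> H i - {x}"
      proof -
        have "\<forall>i\<in>?M. finite (H i - {x}) \<and> k - 2 \<le> card (H i - {x})"
          using H by (auto simp: card_Diff_singleton_if)
        then show ?thesis using sdr_greedy[of ?M "k - 2" "\<lambda>i. H i - {x}"] cM fN that by auto
      qed
      have "card (a ` ?M) \<le> k - 2" using cM card_image_le fN by (metis finite_Diff)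
      moreover have "k \<ge> 2" using pq \<open>p \<noteq> q\<close> by linarith
      ultimately have "card (a ` ?M) < card (H q)" using eq pq by simp
      then have "\<not> H q \<subseteq> a ` ?M" using fN by (meson card_mono finite_imageI finite_Diff not_le)
      then obtain y where y: "y \<in> H q" "y \<notin> a ` ?M" by auto
      define b where "b = a(p := x, q := y)"
      have bM: "\<And>i. i \<in> ?M \<Longrightarrow> b i = a i" and bp: "b p = x" and bq: "b q = y"
        using \<open>p \<noteq> q\<close> by (auto simp: b_def)
      have ax: "\<And>i. i \<in> ?M \<Longrightarrow> a i \<noteq> x" using a by auto
      have ay: "\<And>i. i \<in> ?M \<Longrightarrow> a i \<noteq> y" using y by auto
      have xy: "x \<noteq> y" using x y by auto
      have "inj_on b N"
        unfolding inj_on_def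
      proof (intro ballI impI)
        fix i j assume ij: "i \<in> N" "j \<in> N" "b i = b j"
        have "i \<in> ?M \<or> i = p \<or> i = q" "j \<in> ?M \<or> j = p \<or> j = q" using ij by auto
        then show "i = j"
        proof (elim disjE)
          assume "i \<in> ?M" "j \<in> ?M" then show ?thesis using ij(3) bM inj_onD[OF a(1)] by metis
        qed (use ij(3) bM bp bq ax ay xy in \<open>metis\<close>)+
      qed
      moreover have "\<forall>i\<in>N. b i \<in> H i"
      proof
        fix i assume i: "i \<in> N"
        then have "i \<in> ?M \<or> i = p \<or> i = q" by blast
        then show "b i \<in> H i" using a(2) bM bp bq x y by (elim disjE) auto
      qed
      ultimately show ?thesis by blast
    next
      case False
      have "\<forall>i<k. H i = H 0"
      proof (intro allI impI)
        fix i assume "i < k"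
        then show "H i = H 0" using False k by (meson less_le_trans zero_less_one)
      qed
      moreover have "card (H 0) = k - 1" using eq k by simp
      ultimately show ?thesis using NK by blast
    qed
  qed
qed



lemma greedy_rainbow:
  assumes fin: "\<forall>i<k. \<forall>e\<in>G i. finite e \<and> card e \<le> r"
    and ext: "\<forall>i<k. \<forall>U. finite U \<and> card U \<le> r * (k - 1) \<and> U \<inter> P i = {} \<longrightarrow> (\<exists>e\<in>G i. e \<inter> U = {})"
    and prot: "\<forall>i<k. \<forall>j<k. i \<noteq> j \<longrightarrow> (\<forall>e\<in>G j. e \<inter> P i = {})"
  shows "\<exists>e. (\<forall>i<k. e i \<in> G i) \<and> (\<forall>i<k. \<forall>j<k. i \<noteq> j \<longrightarrow> e i \<inter> e j = {})"
proof -
  have "m \<le> k \<Longrightarrow> \<exists>e. (\<forall>i<m. e i \<in> G i) \<and> (\<forall>i<m. \<forall>j<m. i \<noteq> j \<longrightarrow> e i \<inter> e j = {})" for m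
  proof (induction m)
    case 0
    then show ?case by auto
  next
    case (Suc m)
    then obtain e where e: "\<forall>i<m. e i \<in> G i" "\<forall>i<m. \<forall>j<m. i \<noteq> j \<longrightarrow> e i \<inter> e j = {}" by auto
    define U where "U = (\<Union>i<m. e i)"
    have fU: "finite U" unfolding U_def
    proof (intro finite_UN_I)
      fix i assume "i \<in> {..<m}"
      then have "i < k" "e i \<in> G i" using e(1) Suc.prems by auto
      then show "finite (e i)" using fin by blast
    qed simp
    have "card U \<le> (\<Sum>i<m. card (e i))" unfolding U_def by (rule card_UN_le) simp
    also have "\<dots> \<le> (\<Sum>i<m. r)"
    proof (rule sum_mono)
      fix i assume "i \<in> {..<m}"
      then have "i < k" "e i \<in> G i" using e(1) Suc.prems by auto
      then show "card (e i) \<le> r" using fin by blast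
    qed
    also have "\<dots> = r * m" by simp
    also have "\<dots> \<le> r * (k - 1)" using Suc.prems by (intro mult_le_mono2) linarith
    finally have cU: "card U \<le> r * (k - 1)" .
    have "U \<inter> P m = {}"
    proof -
      have "e i \<inter> P m = {}" if "i < m" for i
      proof -
        have "i < k" "m < k" "m \<noteq> i" "e i \<in> G i" using that e(1) Suc.prems by auto
        then show ?thesis using prot by blast
      qed
      then show ?thesis unfolding U_def by blast
    qed
    moreover have "m < k" using Suc.prems by simp
    ultimately have "\<exists>x\<in>G m. x \<inter> U = {}" using ext fU cU by blast
    then obtain x where x: "x \<in> G m" "x \<inter> U = {}" by blast
    have "\<forall>i<Suc m. (e(m := x)) i \<in> G i" using e x by (auto simp: less_Suc_eq)
    moreover have "\<forall>i<Suc m. \<forall>j<Suc m. i \<noteq> j \<longrightarrow> (e(m := x)) i \<inter> (e(m := x)) j = {}"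
      using e(2) x(2) unfolding U_def by (auto simp: less_Suc_eq)
    ultimately show ?case by blast
  qed
  then show ?thesis by blast
qed


lemma assemble:
  fixes F :: "nat \<Rightarrow> (nat \<times> nat) set set" and a :: "nat \<Rightarrow> nat \<times> nat"
  assumes F: "\<forall>i<k. F i \<subseteq> complete_rpartite r n"
    and k1: "k \<ge> 1" and T: "T = k + r + r * k" and n: "n > c * T"
    and N': "N' \<subseteq> {..<k}" "inj_on a N'" "\<forall>i\<in>N'. c * deg (F i) (a i) \<ge> n ^ (r - 1)"
    and rob: "\<forall>i<k. i \<notin> N' \<longrightarrow> \<not> (sp \<and> i = 0) \<longrightarrow> robust T (F i)"
    and sp1: "sp \<Longrightarrow> 0 \<notin> N' \<and> g \<in> F 0 \<and> g \<inter> a ` N' = {}" and sp2: "\<not> sp \<Longrightarrow> g = {}"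
  shows "\<exists>e. rainbow_matching k F e"
proof -
  define Y where "Y = a ` N' \<union> g"
  define G where "G i = (if i \<in> N' then {e \<in> F i. a i \<in> e \<and> e \<inter> (Y - {a i}) = {}}
      else if sp \<and> i = 0 then {g} else {e \<in> F i. e \<inter> Y = {}})" for i
  define P where "P i = (if i \<in> N' then {a i} else if sp \<and> i = 0 then g else {})" for i
  have GF: "G i \<subseteq> F i" if "i < k" for i
    using sp1 by (auto simp: G_def)
  have fN': "finite N'" using N' finite_subset by blast
  have cg: "finite g \<and> card g \<le> r"
  proof (cases sp)
    case True
    then have "g \<in> complete_rpartite r n" using sp1 F k1 by auto
    then show ?thesis using edge_finite_card by blast
  qed (use sp2 in auto)
  have fY: "finite Y" unfolding Y_def using fN' cg by simp
  have "card Y \<le> card (a ` N') + card g" unfolding Y_def by (rule card_Un_le)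
  also have "card (a ` N') \<le> k"
    using card_image_le[OF fN', of a] card_mono[OF _ N'(1)] by (metis finite_lessThan card_lessThan le_trans)
  finally have cY: "card Y \<le> k + r" using cg by linarith
  have hyp1: "\<forall>i<k. \<forall>e\<in>G i. finite e \<and> card e \<le> r"
    using GF F edge_finite_card by blast
  have hyp2: "\<forall>i<k. \<forall>U. finite U \<and> card U \<le> r * (k - 1) \<and> U \<inter> P i = {} \<longrightarrow> (\<exists>e\<in>G i. e \<inter> U = {})"
  proof (intro allI impI)
    fix i U assume i: "i < k" and U: "finite U \<and> card U \<le> r * (k - 1) \<and> U \<inter> P i = {}"
    have rk: "r * (k - 1) \<le> r * k" by simp
    show "\<exists>e\<in>G i. e \<inter> U = {}"
    proof (cases "i \<in> N'")
      case True
      define Z where "Z = U \<union> (Y - {a i})"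
      have fZ: "finite Z" unfolding Z_def using U fY by simp
      have "card Z \<le> card U + card (Y - {a i})" unfolding Z_def by (rule card_Un_le)
      also have "card (Y - {a i}) \<le> card Y" using fY by (simp add: card_mono)
      finally have cZ: "card Z \<le> T" using U cY T rk by linarith
      have aZ: "a i \<notin> Z" using U True unfolding Z_def P_def by auto
      obtain e where e: "e \<in> F i" "a i \<in> e" "e \<inter> Z = {}"
        using heavy_edge[OF _ fZ aZ cZ _ n] F i N'(3) True by blast
      then have "e \<in> G i" "e \<inter> U = {}" using True unfolding G_def Z_def by auto
      then show ?thesis by blast
    next
      case False
      show ?thesis
      proof (cases "sp \<and> i = 0")
        case True
        then show ?thesis using False U unfolding G_def P_def by auto
      next
        case spF: False
        define Z where "Z = U \<union> Y"
        have fZ: "finite Z" unfolding Z_def using U fY by simp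
        have "card Z \<le> card U + card Y" unfolding Z_def by (rule card_Un_le)
        then have cZ: "card Z \<le> T" using U cY T rk by linarith
        have "robust T (F i)" using rob i False spF by blast
        then obtain e where e: "e \<in> F i" "e \<inter> Z = {}" unfolding robust_def using fZ cZ by blast
        then have "e \<in> G i" "e \<inter> U = {}" using False spF unfolding G_def Z_def by auto
        then show ?thesis by blast
      qed
    qed
  qed
  have hyp3: "\<forall>i<k. \<forall>j<k. i \<noteq> j \<longrightarrow> (\<forall>e\<in>G j. e \<inter> P i = {})"
  proof (intro allI impI ballI)
    fix i j e assume ij: "i < k" "j < k" "i \<noteq> j" and e: "e \<in> G j"
    show "e \<inter> P i = {}"
    proof (cases "i \<in> N'")
      case iN: True
      then have ai: "a i \<in> Y" unfolding Y_def by auto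
      show ?thesis
      proof (cases "j \<in> N'")
        case True
        then have "a i \<noteq> a j" using iN ij N'(2) by (meson inj_onD)
        then show ?thesis using e True iN ai unfolding G_def P_def by auto
      next
        case jN: False
        show ?thesis
        proof (cases "sp \<and> j = 0")
          case True
          then have "e = g" using e jN unfolding G_def by auto
          then show ?thesis using sp1 True iN unfolding P_def by auto
        next
          case False
          then show ?thesis using e jN iN ai unfolding G_def P_def by auto
        qed
      qed
    next
      case iN: False
      show ?thesis
      proof (cases "sp \<and> i = 0")
        case spi: True
        then have jsp: "\<not> (sp \<and> j = 0)" using ij by auto
        show ?thesis
        proof (cases "j \<in> N'")
          case True
          then have "a j \<notin> g" using sp1 spi by auto
          then show ?thesis using e True spi iN unfolding G_def P_def Y_def by auto
        next
          case False
          then show ?thesis using e jsp spi iN unfolding G_def P_def Y_def by auto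
        qed
      next
        case False
        then show ?thesis using iN unfolding P_def by auto
      qed
    qed
  qed
  obtain e where e: "\<forall>i<k. e i \<in> G i" "\<forall>i<k. \<forall>j<k. i \<noteq> j \<longrightarrow> e i \<inter> e j = {}"
    using greedy_rainbow[OF hyp1 hyp2 hyp3] by blast
  have "rainbow_matching k F e"
    unfolding rainbow_matching_def using e GF by blast
  then show ?thesis by blast
qed


theorem theorem9p1:
  fixes r k :: nat
  assumes "r \<ge> 1" and "k \<ge> 1"
  shows "\<exists>n0::nat. \<forall>n > n0. \<forall>F :: nat \<Rightarrow> (nat \<times> nat) set set.
           (\<forall>i<k. F i \<subseteq> complete_rpartite r n \<and> card (F i) > (k - 1) * n ^ (r - 1))
           \<longrightarrow> (\<exists>e. rainbow_matching k F e)"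
proof -
  define T where "T = k + r + r * k"
  define c where "c = T"
  have c: "c \<ge> T" "c > 0" using assms unfolding c_def T_def by auto
  show ?thesis
  proof (rule exI[of _ "c * T"], intro allI impI)
    fix n :: nat and F :: "nat \<Rightarrow> (nat \<times> nat) set set"
    assume n: "n > c * T"
    assume hF: "\<forall>i<k. F i \<subseteq> complete_rpartite r n \<and> card (F i) > (k - 1) * n ^ (r - 1)"
    have n0: "n > 0" using n by simp
    have Fc: "\<forall>i<k. F i \<subseteq> complete_rpartite r n" using hF by blast
    define H where "H i = heavy c n r (F i)" for i
    define N where "N = {i. i < k \<and> \<not> robust T (F i)}"
    have NK: "N \<subseteq> {..<k}" unfolding N_def by auto
    have HN: "\<forall>i\<in>N. finite (H i) \<and> k - 1 \<le> card (H i)"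
    proof
      fix i assume "i \<in> N"
      then have i: "i < k" "\<not> robust T (F i)" unfolding N_def by auto
      show "finite (H i) \<and> k - 1 \<le> card (H i)"
        unfolding H_def using heavy_finite[of "F i" r n c] nonrobust_heavy[of "F i" r n T c k] i hF c n0
        by blast
    qed
    have heavyD: "c * deg (F i) v \<ge> n ^ (r - 1)" if "v \<in> H i" for i v
      using that unfolding H_def heavy_def by auto
    have D: "(\<exists>a. inj_on a N \<and> (\<forall>i\<in>N. a i \<in> H i)) \<or>
         (N = {..<k} \<and> (\<forall>i<k. H i = H 0) \<and> card (H 0) = k - 1)"
      by (rule anchors[OF assms(2) NK HN])
    show "\<exists>e. rainbow_matching k F e"
    proof (cases "\<exists>a. inj_on a N \<and> (\<forall>i\<in>N. a i \<in> H i)")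
      case True
      then obtain a where a: "inj_on a N" "\<forall>i\<in>N. a i \<in> H i" by blast
      show ?thesis
      proof (rule assemble[OF Fc assms(2) T_def n NK a(1), where sp = False and g = "{}"])
        show "\<forall>i\<in>N. n ^ (r - 1) \<le> c * deg (F i) (a i)" using a(2) heavyD by blast
        show "\<forall>i<k. i \<notin> N \<longrightarrow> \<not> (False \<and> i = 0) \<longrightarrow> robust T (F i)" unfolding N_def by auto
      qed auto
    next
      case False
      then have sp: "N = {..<k} \<and> (\<forall>i<k. H i = H 0) \<and> card (H 0) = k - 1" using D by blast
      have k0: "0 < k" using assms by simp
      have fF0: "finite (F 0)" using Fc k0 finite_complete finite_subset by blast
      have "0 \<in> N" using sp k0 by simp
      then have fH0: "finite (H 0)" using HN by blast
      have 0: "card (F 0) \<le> card {e \<in> F 0. e \<inter> H 0 = {}} + (\<Sum>z\<in>H 0. deg (F 0) z)"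
        by (rule avoid_count[OF fF0 fH0])
      have "(\<Sum>z\<in>H 0. deg (F 0) z) \<le> (\<Sum>z\<in>H 0. n ^ (r - 1))"
        by (intro sum_mono deg_le) (use Fc k0 in blast)
      also have "\<dots> = (k - 1) * n ^ (r - 1)" using sp by simp
      finally have 1: "card (F 0) \<le> card {e \<in> F 0. e \<inter> H 0 = {}} + (k - 1) * n ^ (r - 1)"
        using 0 by linarith
      have "(k - 1) * n ^ (r - 1) < card (F 0)" using hF k0 by blast
      then have "card {e \<in> F 0. e \<inter> H 0 = {}} \<noteq> 0" using 1 by linarith
      then have "{e \<in> F 0. e \<inter> H 0 = {}} \<noteq> {}" by (metis card.empty)
      then obtain g where g: "g \<in> F 0" "g \<inter> H 0 = {}" by blast
      define N' where "N' = {..<k} - {0}"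
      have cN': "card N' = k - 1" unfolding N'_def using k0 by simp
      have fN': "finite N'" unfolding N'_def by simp
      have "\<forall>i\<in>N'. finite (H 0) \<and> k - 1 \<le> card (H 0)" using fH0 sp by simp
      then have "\<exists>a. inj_on a N' \<and> (\<forall>i\<in>N'. a i \<in> H 0)"
        using sdr_greedy[OF fN', of "k - 1" "\<lambda>_. H 0"] cN' by simp
      then obtain a where a: "inj_on a N'" "\<forall>i\<in>N'. a i \<in> H 0" by blast
      have s1: "N' \<subseteq> {..<k}" unfolding N'_def by auto
      have s2: "\<forall>i\<in>N'. n ^ (r - 1) \<le> c * deg (F i) (a i)"
      proof
        fix i assume i: "i \<in> N'"
        then have "i < k" unfolding N'_def by simp
        then have "H i = H 0" using sp by blast
        then show "n ^ (r - 1) \<le> c * deg (F i) (a i)" using a(2) i heavyD by metis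
      qed
      have s3: "\<forall>i<k. i \<notin> N' \<longrightarrow> \<not> (True \<and> i = 0) \<longrightarrow> robust T (F i)" unfolding N'_def by auto
      have "a ` N' \<subseteq> H 0" using a(2) by blast
      then have s4: "True \<Longrightarrow> 0 \<notin> N' \<and> g \<in> F 0 \<and> g \<inter> a ` N' = {}" using g unfolding N'_def by blast
      have s5: "\<not> True \<Longrightarrow> g = {}" by simp
      show ?thesis by (rule assemble[OF Fc assms(2) T_def n s1 a(1) s2 s3 s4 s5])
    qed
  qed
qed


end
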